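(* Let $X$ be a finite set with $N=|X|$ and $n=\binom N2$. Let $t,t'$ be two binary equidistant trees on taxa $X$ with different coarse types, and let $\Omega>\omega>0$ be such that $\max\{\eta(t),\eta(t')\}\le\Omega$ and $\min\{\nu(t),\nu(t')\}\ge\omega$. Then \[ d_\Delta(t,t')\ \ge\ \omega\Bigl(\bigl(3-2\tfrac{\Omega}{\omega}\bigr)n+\tfrac32 N-2\Bigr). \]
   Context: An equidistant tree $t$ on taxa $X$ is identified with the vector $(t_{ab})\in\mathbb{R}^n$ (coordinates indexed by unordered pairs of distinct taxa) of leaf-to-leaf path lengths; such vectors are exactly those for which, for all distinct $a,b,c$, $\max\{t_{ab},t_{ac},t_{bc}\}$ is attained at least twice. Trees are considered up to adding a multiple of $\mathbb{1}$. The depth of a node is its distance from the root. Let $M=\max_{a\ne b}t_{ab}$; the depth of the lowest common ancestor of leaves $a\ne b$ equals $(M-t_{ab})/2$. Define $\eta(t)$ = maximal depth of an internal node $=\frac12(M-\min_{a\neq b}t_{ab})$ and $\nu(t)$ = minimal depth of an internal node other than the root $=\frac12\min\{M-t_{ab}: t_{ab}<M\}$ ($+\infty$ if there is none). The coarse type of $t$ is the partition of $X$ into the leaf sets of the subtrees at the children of the root, i.e. distinct $a,b$ are in the same block iff $t_{ab}<M$. The tree is binary if every internal node has exactly two children, i.e. for all distinct $a,b,c$ the numbers $t_{ab},t_{ac},t_{bc}$ are not all equal. $d_{\Delta}(x,y)=\sum_{i=1}^n (y_i-x_i) + n\max_{i}(x_i-y_i)$. *)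

theory Defs
  imports Complex_Main "HOL-Library.Extended_Real"
begin

text \<open>Coordinates are indexed by unordered pairs of distinct taxa, i.e. 2-element subsets of X.
  A vector is a function from such pairs to the reals: t {a,b} = t_ab.\<close>

definition pairs :: "'a set \<Rightarrow> 'a set set" where
  "pairs X = {p. p \<subseteq> X \<and> card p = 2}"

definition equidistant :: "'a set \<Rightarrow> ('a set \<Rightarrow> real) \<Rightarrow> bool" where
  "equidistant X t \<longleftrightarrow>
     (\<forall>a\<in>X. \<forall>b\<in>X. \<forall>c\<in>X. a \<noteq> b \<and> a \<noteq> c \<and> b \<noteq> c \<longrightarrow>
        (let m = max (t {a,b}) (max (t {a,c}) (t {b,c})) in
          (t {a,b} = m \<and> t {a,c} = m) \<or> (t {a,b} = m \<and> t {b,c} = m) \<or> (t {a,c} = m \<and> t {b,c} = m)))"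

definition binary_tree :: "'a set \<Rightarrow> ('a set \<Rightarrow> real) \<Rightarrow> bool" where
  "binary_tree X t \<longleftrightarrow> equidistant X t \<and>
     (\<forall>a\<in>X. \<forall>b\<in>X. \<forall>c\<in>X. a \<noteq> b \<and> a \<noteq> c \<and> b \<noteq> c \<longrightarrow>
        \<not> (t {a,b} = t {a,c} \<and> t {a,c} = t {b,c}))"

definition maxdist :: "'a set \<Rightarrow> ('a set \<Rightarrow> real) \<Rightarrow> real" where
  "maxdist X t = Max (t ` pairs X)"

definition eta :: "'a set \<Rightarrow> ('a set \<Rightarrow> real) \<Rightarrow> real" where
  "eta X t = (maxdist X t - Min (t ` pairs X)) / 2"

definition nu :: "'a set \<Rightarrow> ('a set \<Rightarrow> real) \<Rightarrow> ereal" where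
  "nu X t = (if {p \<in> pairs X. t p < maxdist X t} = {} then \<infinity>
             else ereal (Min ((\<lambda>p. maxdist X t - t p) ` {p \<in> pairs X. t p < maxdist X t}) / 2))"

definition coarse_type :: "'a set \<Rightarrow> ('a set \<Rightarrow> real) \<Rightarrow> 'a set set" where
  "coarse_type X t = X // {(a,b). a \<in> X \<and> b \<in> X \<and> (a = b \<or> t {a,b} < maxdist X t)}"

definition d_Delta :: "'a set \<Rightarrow> ('a set \<Rightarrow> real) \<Rightarrow> ('a set \<Rightarrow> real) \<Rightarrow> real" where
  "d_Delta X x y = (\<Sum>p\<in>pairs X. y p - x p)
       + real (card (pairs X)) * Max ((\<lambda>p. x p - y p) ` pairs X)"

end

theory Submission
  imports Defs
begin

lemma pairs_I: "a \<in> X \<Longrightarrow> b \<in> X \<Longrightarrow> a \<noteq> b \<Longrightarrow> {a,b} \<in> pairs X"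
  by (simp add: pairs_def)

lemma pairs_E: "p \<in> pairs X \<Longrightarrow> (\<And>a b. a \<in> X \<Longrightarrow> b \<in> X \<Longrightarrow> a \<noteq> b \<Longrightarrow> p = {a,b} \<Longrightarrow> P) \<Longrightarrow> P"
  unfolding pairs_def by (auto simp: card_2_iff)

lemma finite_pairs: "finite X \<Longrightarrow> finite (pairs X)"
  unfolding pairs_def by (rule finite_subset[of _ "Pow X"]) auto

lemma card_pairs: "finite X \<Longrightarrow> card (pairs X) = card X choose 2"
  unfolding pairs_def using n_subsets by blast

lemma ultra:
  assumes "equidistant X t" "a \<in> X" "b \<in> X" "c \<in> X" "a \<noteq> b" "a \<noteq> c" "b \<noteq> c"
  shows "t {a,b} \<le> max (t {a,c}) (t {b,c})"
proof -
  have "(t {a,b} = max (t {a,b}) (max (t {a,c}) (t {b,c})) \<and> t {a,c} = max (t {a,b}) (max (t {a,c}) (t {b,c}))) \<or>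
        (t {a,b} = max (t {a,b}) (max (t {a,c}) (t {b,c})) \<and> t {b,c} = max (t {a,b}) (max (t {a,c}) (t {b,c}))) \<or>
        (t {a,c} = max (t {a,b}) (max (t {a,c}) (t {b,c})) \<and> t {b,c} = max (t {a,b}) (max (t {a,c}) (t {b,c})))"
    using assms(1-7) unfolding equidistant_def Let_def by blast
  then show ?thesis by linarith
qed

lemma max_attained:
  assumes "equidistant X t" "a \<in> X" "b \<in> X" "c \<in> X" "a \<noteq> b" "a \<noteq> c" "b \<noteq> c"
    "t {a,b} = M" "t {a,c} \<le> M" "t {b,c} \<le> M"
  shows "t {a,c} = M \<or> t {b,c} = M"
proof -
  have "(t {a,b} = max (t {a,b}) (max (t {a,c}) (t {b,c})) \<and> t {a,c} = max (t {a,b}) (max (t {a,c}) (t {b,c}))) \<or>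
        (t {a,b} = max (t {a,b}) (max (t {a,c}) (t {b,c})) \<and> t {b,c} = max (t {a,b}) (max (t {a,c}) (t {b,c}))) \<or>
        (t {a,c} = max (t {a,b}) (max (t {a,c}) (t {b,c})) \<and> t {b,c} = max (t {a,b}) (max (t {a,c}) (t {b,c})))"
    using assms(1-7) unfolding equidistant_def Let_def by blast
  moreover have "max (t {a,b}) (max (t {a,c}) (t {b,c})) = M" using assms(8-10) by linarith
  ultimately show ?thesis by auto
qed

lemma not_all:
  assumes "binary_tree X t" "a \<in> X" "b \<in> X" "c \<in> X" "a \<noteq> b" "a \<noteq> c" "b \<noteq> c"
  shows "\<not> (t {a,b} = t {a,c} \<and> t {a,c} = t {b,c})"
proof -
  have "\<forall>a\<in>X. \<forall>b\<in>X. \<forall>c\<in>X. a \<noteq> b \<and> a \<noteq> c \<and> b \<noteq> c \<longrightarrow>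
        \<not> (t {a,b} = t {a,c} \<and> t {a,c} = t {b,c})" using assms(1) unfolding binary_tree_def by (rule conjunct2)
  then show ?thesis using assms(2-7) by blast
qed

lemma le_max: "finite X \<Longrightarrow> p \<in> pairs X \<Longrightarrow> t p \<le> maxdist X t"
  unfolding maxdist_def by (rule Max_ge) (auto simp: finite_pairs)

lemma max_in: "finite X \<Longrightarrow> pairs X \<noteq> {} \<Longrightarrow> \<exists>p\<in>pairs X. t p = maxdist X t"
proof -
  assume a: "finite X" "pairs X \<noteq> {}"
  have "Max (t ` pairs X) \<in> t ` pairs X" by (rule Max_in) (use a finite_pairs in auto)
  then show ?thesis unfolding maxdist_def by (auto simp del: Max_in)
qed

lemma sim_trans:
  assumes "equidistant X t" "x \<in> X" "y \<in> X" "z \<in> X"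
    "x = y \<or> t {x,y} < M" "y = z \<or> t {y,z} < M"
  shows "x = z \<or> t {x,z} < M"
proof (cases "x = y \<or> y = z \<or> x = z")
  case True
  moreover have "{x,y} = {y,x}" by blast
  moreover have "x = y \<Longrightarrow> ?thesis" using assms(6) by simp
  moreover have "y = z \<Longrightarrow> ?thesis" using assms(5) by simp
  ultimately show ?thesis by blast
next
  case False
  then have "t {x,z} \<le> max (t {x,y}) (t {z,y})" using ultra[OF assms(1), of x z y] assms by auto
  moreover have "{z,y} = {y,z}" by blast
  moreover have "t {x,y} < M" "t {y,z} < M" using assms(5,6) False by blast+
  ultimately have "t {x,z} < M" by simp
  then show ?thesis by blast
qed

lemma two_blocks:
  assumes "binary_tree X t" "finite X" "a \<in> X" "b \<in> X" "a \<noteq> b" "t {a,b} = maxdist X t" "x \<in> X"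
  shows "(x = a \<or> t {x,a} < maxdist X t) \<or> (x = b \<or> t {x,b} < maxdist X t)"
proof (cases "x = a \<or> x = b")
  case False
  have p1: "{a,x} \<in> pairs X" using pairs_I[of a X x] assms(3,7) False by blast
  have p2: "{b,x} \<in> pairs X" using pairs_I[of b X x] assms(4,7) False by blast
  have l1: "t {a,x} \<le> maxdist X t" "t {b,x} \<le> maxdist X t"
    using le_max[OF assms(2) p1] le_max[OF assms(2) p2] by auto
  have "\<not> (t {a,b} = t {a,x} \<and> t {a,x} = t {b,x})" using not_all[OF assms(1,3,4,7,5)] False by blast
  then have "t {a,x} < maxdist X t \<or> t {b,x} < maxdist X t" using l1 assms(6) by linarith
  moreover have "t {x,a} = t {a,x}" "t {x,b} = t {b,x}" by (simp_all add: insert_commute)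
  ultimately show ?thesis by argo
next
  case True then show ?thesis by blast
qed

lemma tcomm: "t {x,y} = t {y,x}" by (simp add: insert_commute)

lemma cross_upper:
  assumes "finite X" "binary_tree X t" "\<forall>p\<in>pairs X. t p \<le> M"
  shows "4 * real (card {p\<in>pairs X. t p = M}) \<le> real (card X)^2"
proof (cases "X = {}")
  case True
  then have "pairs X = {}" unfolding pairs_def by auto
  then show ?thesis by simp
next
  case False
  then obtain u where u: "u \<in> X" by blast
  have e: "equidistant X t" using assms(2) binary_tree_def by blast
  define A where "A = {x\<in>X. x = u \<or> t {u,x} < M}"
  define B where "B = X - A"
  have sub: "{p\<in>pairs X. t p = M} \<subseteq> (\<lambda>(x,y). {x,y}) ` (A \<times> B)"
  proof
    fix p assume "p \<in> {p\<in>pairs X. t p = M}"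
    then have pp: "p \<in> pairs X" "t p = M" by auto
    from pp(1) obtain x y where xy: "x\<in>X" "y\<in>X" "x\<noteq>y" "p={x,y}" by (rule pairs_E)
    have notAA: "\<not> (x \<in> A \<and> y \<in> A)"
    proof
      assume "x\<in>A \<and> y\<in>A"
      then have hx: "x = u \<or> t{u,x} < M" and hy: "u = y \<or> t{u,y} < M" by (auto simp: A_def)
      have hx': "x = u \<or> t{x,u} < M" using hx tcomm[of t x u] by argo
      have "x = y \<or> t{x,y} < M" using sim_trans[OF e xy(1) u xy(2), of M] hx' hy by blast
      then show False using xy pp by auto
    qed
    have notBB: "\<not> (x\<in>B \<and> y\<in>B)"
    proof
      assume "x\<in>B \<and> y\<in>B"
      then have h: "x \<noteq> u" "y \<noteq> u" "\<not> t{u,x} < M" "\<not> t{u,y} < M" using u xy by (auto simp: A_def B_def)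
      have "t{u,x} \<le> M" "t{u,y} \<le> M" using assms(3) pairs_I[OF u xy(1)] pairs_I[OF u xy(2)] h by auto
      then have "t{u,x} = M" "t{u,y} = M" using h by auto
      moreover have "\<not> (t {u,x} = t {u,y} \<and> t {u,y} = t {x,y})"
        using not_all[OF assms(2) u xy(1) xy(2)] h xy(3) by blast
      ultimately show False using pp xy by auto
    qed
    have "x \<in> A \<union> B" "y \<in> A \<union> B" using xy by (auto simp: B_def)
    then have "(x\<in>A \<and> y\<in>B) \<or> (y\<in>A \<and> x\<in>B)" using notAA notBB by blast
    then show "p \<in> (\<lambda>(x,y). {x,y}) ` (A \<times> B)"
    proof
      assume "x\<in>A \<and> y\<in>B" then show ?thesis using xy(4) by force
    next
      assume "y\<in>A \<and> x\<in>B"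
      moreover have "p = {y,x}" using xy(4) by blast
      ultimately show ?thesis by force
    qed
  qed
  have fA: "finite A" "finite B" using assms(1) by (auto simp: A_def B_def)
  have "card {p\<in>pairs X. t p = M} \<le> card ((\<lambda>(x,y). {x,y}) ` (A \<times> B))"
    by (rule card_mono) (use fA sub in auto)
  also have "\<dots> \<le> card (A \<times> B)" by (rule card_image_le) (use fA in auto)
  also have "\<dots> = card A * card B" by (rule card_cartesian_product)
  finally have c1: "card {p\<in>pairs X. t p = M} \<le> card A * card B" .
  have "A \<subseteq> X" by (auto simp: A_def)
  then have "card B = card X - card A" "card A \<le> card X"
    using assms(1) fA by (auto simp: B_def card_Diff_subset card_mono)
  then have c2: "card A + card B = card X" by simp
  have "4 * real (card {p\<in>pairs X. t p = M}) \<le> 4 * (real (card A) * real (card B))"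
    using c1 by (metis of_nat_le_iff of_nat_mult mult_le_cancel_left_pos zero_less_numeral)
  also have "\<dots> \<le> (real (card A) + real (card B))^2"
  proof -
    have "(real (card A) + real (card B))^2 - 4 * (real (card A) * real (card B)) = (real (card A) - real (card B))^2"
      by (simp add: power2_eq_square algebra_simps)
    then show ?thesis using zero_le_power2[of "real (card A) - real (card B)"] by linarith
  qed
  also have "\<dots> = real (card X)^2" using c2 by (metis of_nat_add)
  finally show ?thesis .
qed

lemma cross_lower:
  assumes "finite X" "equidistant X t" "\<forall>p\<in>pairs X. t p \<le> M" "u\<in>X" "v\<in>X" "u\<noteq>v" "t{u,v} = M"
  shows "card X \<le> card {p\<in>pairs X. t p = M} + 1"
proof -
  define f where "f x = (if x = v then {u,v} else if t{u,x} = M then {u,x} else {v,x})" for x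
  have img: "f ` (X - {u}) \<subseteq> {p\<in>pairs X. t p = M}"
  proof
    fix p assume "p \<in> f ` (X - {u})"
    then obtain x where x: "x \<in> X" "x \<noteq> u" "p = f x" by blast
    show "p \<in> {p\<in>pairs X. t p = M}"
    proof (cases "x = v")
      case True then show ?thesis using x assms pairs_I[of u X v] by (simp add: f_def)
    next
      case False
      have b: "t{u,x} \<le> M" "t{v,x} \<le> M" using assms(3) pairs_I[OF assms(4) x(1)] pairs_I[OF assms(5) x(1)] x False by auto
      have "t {u,x} = M \<or> t {v,x} = M" by (rule max_attained[OF assms(2,4,5) x(1) assms(6)]) (use x False assms b in auto)
      then show ?thesis using x False pairs_I[OF assms(4) x(1)] pairs_I[OF assms(5) x(1)] by (auto simp: f_def)
    qed
  qed
  have mem: "x \<in> f x" for x by (simp add: f_def)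
  have sub: "x \<noteq> v \<Longrightarrow> f x \<subseteq> {u,v,x}" for x by (auto simp: f_def)
  have fv: "f v = {u,v}" by (simp add: f_def)
  have inj: "inj_on f (X - {u})"
  proof (rule inj_onI)
    fix x y assume xy: "x \<in> X - {u}" "y \<in> X - {u}" "f x = f y"
    show "x = y"
    proof (cases "x = v"; cases "y = v")
      assume "x = v" "y \<noteq> v"
      then have "y \<in> {u,v}" using mem[of y] xy fv by auto
      then show ?thesis using xy \<open>y \<noteq> v\<close> by auto
    next
      assume "x \<noteq> v" "y = v"
      then have "x \<in> {u,v}" using mem[of x] xy fv by auto
      then show ?thesis using xy \<open>x \<noteq> v\<close> by auto
    next
      assume "x \<noteq> v" "y \<noteq> v"
      then have "x \<in> {u,v,y}" using mem[of x] xy sub[of y] by auto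
      then show ?thesis using xy \<open>x \<noteq> v\<close> by auto
    qed simp
  qed
  have "card (X - {u}) \<le> card {p\<in>pairs X. t p = M}"
    by (rule card_inj_on_le[OF inj img]) (simp add: assms(1) finite_pairs)
  moreover have "card (X - {u}) = card X - 1" using assms(1,4) by simp
  ultimately show ?thesis by linarith
qed

lemma sim_sym: "(x = y \<or> t{x,y} < M) \<Longrightarrow> (y = x \<or> t{y,x} < M)"
  using tcomm[of t x y] by argo

lemma exists_q:
  assumes fin: "finite X" and bt: "binary_tree X t" and bt': "binary_tree X t'"
    and ct: "coarse_type X t \<noteq> coarse_type X t'"
  shows "\<exists>q\<in>pairs X. t q = maxdist X t \<and> t' q < maxdist X t'"
proof (rule ccontr)
  assume H0: "\<not> ?thesis"
  define M where "M = maxdist X t"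
  define M' where "M' = maxdist X t'"
  have e: "equidistant X t" using bt unfolding binary_tree_def by (rule conjunct1)
  have e': "equidistant X t'" using bt' unfolding binary_tree_def by (rule conjunct1)
  have H: "t p < M" if "p \<in> pairs X" "t' p < M'" for p
  proof -
    have "\<not> (t p = M \<and> t' p < M')" using H0 that(1) unfolding M_def M'_def by blast
    moreover have "t p \<le> M" using le_max[OF fin that(1)] unfolding M_def .
    ultimately show ?thesis using that(2) by linarith
  qed
  have lift: "x = y \<or> t{x,y} < M" if "x\<in>X" "y\<in>X" "x = y \<or> t'{x,y} < M'" for x y
  proof (cases "x = y")
    case False
    then have "t'{x,y} < M'" using that(3) by blast
    then have "t{x,y} < M" using H[OF pairs_I[OF that(1,2) False]] by blast
    then show ?thesis by blast
  qed simp
  have iff: "t{a,b} < M \<longleftrightarrow> t'{a,b} < M'" if ab: "a\<in>X" "b\<in>X" "a\<noteq>b" for a b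
  proof
    assume "t'{a,b} < M'" then show "t{a,b} < M" using H[OF pairs_I[OF ab]] by blast
  next
    assume tab: "t{a,b} < M"
    show "t'{a,b} < M'"
    proof (rule ccontr)
      assume "\<not> t'{a,b} < M'"
      then have tab': "t'{a,b} = M'" using le_max[OF fin pairs_I[OF ab], of t'] unfolding M'_def by linarith
      have "pairs X \<noteq> {}" using pairs_I[OF ab] by blast
      from max_in[OF fin this, of t] obtain q where q: "q \<in> pairs X" "t q = M" unfolding M_def by blast
      from q(1) obtain u v where uv: "u\<in>X" "v\<in>X" "u\<noteq>v" "q = {u,v}" by (rule pairs_E)
      have nuv: "\<not> t{u,v} < M" using q uv by simp
      have nuv': "\<not> t'{u,v} < M'" using H q uv by auto
      have tu: "(u = a \<or> t'{u,a} < M') \<or> (u = b \<or> t'{u,b} < M')"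
        using two_blocks[OF bt' fin ab tab'[unfolded M'_def] uv(1)] unfolding M'_def .
      have tv: "(v = a \<or> t'{v,a} < M') \<or> (v = b \<or> t'{v,b} < M')"
        using two_blocks[OF bt' fin ab tab'[unfolded M'_def] uv(2)] unfolding M'_def .
      have sab: "a = b \<or> t{a,b} < M" using tab by blast
      show False
      proof -
        { assume 1: "u = a \<or> t'{u,a} < M'" and 2: "v = a \<or> t'{v,a} < M'"
          have "u = v \<or> t'{u,v} < M'" using sim_trans[OF e' uv(1) ab(1) uv(2) 1 sim_sym[of v a t' M', OF 2]] .
          then have False using uv nuv' by blast }
        moreover
        { assume 1: "u = b \<or> t'{u,b} < M'" and 2: "v = b \<or> t'{v,b} < M'"
          have "u = v \<or> t'{u,v} < M'" using sim_trans[OF e' uv(1) ab(2) uv(2) 1 sim_sym[of v b t' M', OF 2]] .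
          then have False using uv nuv' by blast }
        moreover
        { assume 1: "u = a \<or> t'{u,a} < M'" and 2: "v = b \<or> t'{v,b} < M'"
          have 1: "u = a \<or> t{u,a} < M" using lift[OF uv(1) ab(1) 1] .
          have 2: "b = v \<or> t{b,v} < M" using sim_sym[of v b t M, OF lift[OF uv(2) ab(2) 2]] .
          have "u = b \<or> t{u,b} < M" using sim_trans[OF e uv(1) ab(1) ab(2) 1 sab] .
          then have "u = v \<or> t{u,v} < M" using sim_trans[OF e uv(1) ab(2) uv(2) _ 2] by blast
          then have False using uv nuv by blast }
        moreover
        { assume 1: "u = b \<or> t'{u,b} < M'" and 2: "v = a \<or> t'{v,a} < M'"
          have 1: "u = b \<or> t{u,b} < M" using lift[OF uv(1) ab(2) 1] .
          have 2: "a = v \<or> t{a,v} < M" using sim_sym[of v a t M, OF lift[OF uv(2) ab(1) 2]] .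
          have "u = a \<or> t{u,a} < M" using sim_trans[OF e uv(1) ab(2) ab(1) 1 sim_sym[of a b t M, OF sab]] .
          then have "u = v \<or> t{u,v} < M" using sim_trans[OF e uv(1) ab(1) uv(2) _ 2] by blast
          then have False using uv nuv by blast }
        ultimately show False using tu tv by blast
      qed
    qed
  qed
  have R: "{(a,b). a \<in> X \<and> b \<in> X \<and> (a = b \<or> t {a,b} < M)} = {(a,b). a \<in> X \<and> b \<in> X \<and> (a = b \<or> t' {a,b} < M')}"
  proof (rule set_eqI)
    fix z :: "'a \<times> 'a"
    obtain a b where z: "z = (a,b)" by fastforce
    show "z \<in> {(a,b). a \<in> X \<and> b \<in> X \<and> (a = b \<or> t {a,b} < M)} \<longleftrightarrow> z \<in> {(a,b). a \<in> X \<and> b \<in> X \<and> (a = b \<or> t' {a,b} < M')}"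
      unfolding z using iff[of a b] by blast
  qed
  have "coarse_type X t = coarse_type X t'" unfolding coarse_type_def M_def[symmetric] M'_def[symmetric] R ..
  then show False using ct by blast
qed

lemma two_choose: "2 * (N choose 2) = N * (N - 1)"
proof -
  have "even (N * (N - 1))" by (cases N) auto
  then show ?thesis by (simp add: choose_two)
qed

theorem mainTheorem6:
  fixes X :: "'a set" and t t' :: "'a set \<Rightarrow> real" and \<omega> \<Omega> :: real
  assumes "finite X"
    and "binary_tree X t" and "binary_tree X t'"
    and "coarse_type X t \<noteq> coarse_type X t'"
    and "0 < \<omega>" and "\<omega> < \<Omega>"
    and "max (eta X t) (eta X t') \<le> \<Omega>"
    and "ereal \<omega> \<le> min (nu X t) (nu X t')"
  shows "d_Delta X t t' \<ge>
    \<omega> * ((3 - 2 * (\<Omega> / \<omega>)) * real (card X choose 2) + 3 / 2 * real (card X) - 2)"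
proof -
  note fin = assms(1)
  define M where "M = maxdist X t"
  define M' where "M' = maxdist X t'"
  define N where "N = card X"
  define n where "n = card (pairs X)"
  have fp: "finite (pairs X)" using fin by (rule finite_pairs)
  have e: "equidistant X t" using assms(2) unfolding binary_tree_def by (rule conjunct1)
  have e': "equidistant X t'" using assms(3) unfolding binary_tree_def by (rule conjunct1)
  obtain q where q: "q \<in> pairs X" "t q = M" "t' q < M'"
    using exists_q[OF assms(1-4)] unfolding M_def M'_def by blast
  have tle: "\<forall>p\<in>pairs X. t p \<le> M" using le_max[OF fin] unfolding M_def by blast
  have tle': "\<forall>p\<in>pairs X. t' p \<le> M'" using le_max[OF fin] unfolding M'_def by blast
  have nub: "2 * \<omega> \<le> maxdist X s - s p"
    if s: "ereal \<omega> \<le> nu X s" and p: "p \<in> pairs X" "s p < maxdist X s" for s p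
  proof -
    let ?S = "{p \<in> pairs X. s p < maxdist X s}"
    have ne: "?S \<noteq> {}" using p by blast
    have fS: "finite ?S" using fp by simp
    have nv: "nu X s = ereal (Min ((\<lambda>p. maxdist X s - s p) ` ?S) / 2)"
      unfolding nu_def by (rule if_not_P[OF ne])
    have "ereal \<omega> \<le> ereal (Min ((\<lambda>p. maxdist X s - s p) ` ?S) / 2)"
      using s unfolding nv .
    then have "\<omega> \<le> Min ((\<lambda>p. maxdist X s - s p) ` ?S) / 2" by simp
    moreover have "Min ((\<lambda>p. maxdist X s - s p) ` ?S) \<le> maxdist X s - s p"
      by (rule Min_le) (use fS p in auto)
    ultimately show ?thesis by linarith
  qed
  have etab: "maxdist X s - s p \<le> 2 * \<Omega>"
    if s: "eta X s \<le> \<Omega>" and p: "p \<in> pairs X" for s p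
  proof -
    have "Min (s ` pairs X) \<le> s p" by (rule Min_le) (use fp p in auto)
    moreover have "maxdist X s - Min (s ` pairs X) \<le> 2 * \<Omega>" using s unfolding eta_def by simp
    ultimately show ?thesis by linarith
  qed
  have nu1: "2 * \<omega> \<le> M - t p" if "p \<in> pairs X" "t p < M" for p
    using nub[of t p] assms(8) that unfolding M_def by (simp add: min_def split: if_splits)
  have nu2: "2 * \<omega> \<le> M' - t' p" if "p \<in> pairs X" "t' p < M'" for p
    using nub[of t' p] assms(8) that unfolding M'_def by (simp add: min_def split: if_splits)
  have et1: "M - t p \<le> 2 * \<Omega>" if "p \<in> pairs X" for p
    using etab[of t p] assms(7) that unfolding M_def by simp
  have et2: "M' - t' p \<le> 2 * \<Omega>" if "p \<in> pairs X" for p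
    using etab[of t' p] assms(7) that unfolding M'_def by simp
  define mu where "mu = Max ((\<lambda>p. t p - t' p) ` pairs X)"
  have mug: "t p - t' p \<le> mu" if "p \<in> pairs X" for p
    unfolding mu_def by (rule Max_ge) (use fp that in auto)
  have muq: "M - M' + 2 * \<omega> \<le> mu" using mug[OF q(1)] q nu2[OF q(1) q(3)] by linarith
  define c where "c p = (3 * \<omega> - 2 * \<Omega>) + \<omega> - 2 * \<omega> * of_bool (t p = M) + 2 * \<omega> * of_bool (t' p = M')" for p
  have pp: "c p \<le> mu - t p + t' p" if p: "p \<in> pairs X" for p
  proof -
    have a: "t p \<le> M" "t' p \<le> M'" using tle tle' p by auto
    show ?thesis
    proof (cases "t p = M"; cases "t' p = M'")
      assume "t p = M" "t' p = M'" then show ?thesis using muq assms(6) by (simp add: c_def)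
    next
      assume "t p = M" "t' p \<noteq> M'" then show ?thesis using mug[OF p] assms(6) by (simp add: c_def)
    next
      assume h: "t p \<noteq> M" "t' p = M'"
      then have "t p < M" using a by simp
      then show ?thesis using h muq nu1[OF p] assms(6) by (simp add: c_def)
    next
      assume h: "t p \<noteq> M" "t' p \<noteq> M'"
      then have "t p < M" using a by simp
      then show ?thesis using h muq nu1[OF p] et2[OF p] assms(6) by (simp add: c_def)
    qed
  qed
  have dD: "d_Delta X t t' = (\<Sum>p\<in>pairs X. mu - t p + t' p)"
  proof -
    have "(\<Sum>p\<in>pairs X. mu - t p + t' p) = (\<Sum>p\<in>pairs X. (t' p - t p) + mu)"
      by (rule sum.cong) auto
    also have "\<dots> = (\<Sum>p\<in>pairs X. t' p - t p) + real (card (pairs X)) * mu"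
      by (simp add: sum.distrib)
    finally show ?thesis unfolding d_Delta_def mu_def by simp
  qed
  define C where "C = card {p \<in> pairs X. t p = M}"
  define C' where "C' = card {p \<in> pairs X. t' p = M'}"
  have sumc: "(\<Sum>p\<in>pairs X. c p) = real n * (4 * \<omega> - 2 * \<Omega>) - 2 * \<omega> * real C + 2 * \<omega> * real C'"
  proof -
    have i1: "pairs X \<inter> {p. t p = M} = {p \<in> pairs X. t p = M}" by blast
    have i2: "pairs X \<inter> {p. t' p = M'} = {p \<in> pairs X. t' p = M'}" by blast
    have "(\<Sum>p\<in>pairs X. c p) = (\<Sum>p\<in>pairs X. (4 * \<omega> - 2 * \<Omega>)) - (\<Sum>p\<in>pairs X. 2 * \<omega> * of_bool (t p = M))
       + (\<Sum>p\<in>pairs X. 2 * \<omega> * of_bool (t' p = M'))"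
      unfolding c_def by (simp add: sum.distrib sum_subtractf)
    also have "\<dots> = real n * (4 * \<omega> - 2 * \<Omega>) - 2 * \<omega> * real C + 2 * \<omega> * real C'"
      unfolding sum_distrib_left[symmetric] using fp by (simp add: i1 i2 C_def C'_def n_def)
    finally show ?thesis .
  qed
  have "(\<Sum>p\<in>pairs X. c p) \<le> (\<Sum>p\<in>pairs X. mu - t p + t' p)"
    by (rule sum_mono) (rule pp)
  then have dge: "real n * (4 * \<omega> - 2 * \<Omega>) - 2 * \<omega> * real C + 2 * \<omega> * real C' \<le> d_Delta X t t'"
    using dD sumc by simp
  have Cb: "4 * real C \<le> real N ^ 2" using cross_upper[OF fin assms(2) tle] unfolding C_def N_def .
  obtain u v where uv: "u\<in>X" "v\<in>X" "u\<noteq>v" "q = {u,v}" using q(1) by (rule pairs_E)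
  have "t' {u,v} \<le> M'" using tle' q(1) uv by auto
  have C'b: "N \<le> C' + 1"
  proof (cases "t' {u,v} = M'")
    case True
    show ?thesis using cross_lower[OF fin e' tle' uv(1-3) True] unfolding C'_def N_def .
  next
    case False
    have "pairs X \<noteq> {}" using q by blast
    from max_in[OF fin this, of t'] obtain r where r: "r \<in> pairs X" "t' r = M'" unfolding M'_def by blast
    from r(1) obtain x y where xy: "x\<in>X" "y\<in>X" "x\<noteq>y" "r = {x,y}" by (rule pairs_E)
    have "t' {x,y} = M'" using r xy(4) by simp
    from cross_lower[OF fin e' tle' xy(1-3) this] show ?thesis unfolding C'_def N_def .
  qed
  have nN: "2 * real n = real N * (real N - 1)"
  proof -
    have "2 * n = N * (N - 1)" unfolding n_def N_def card_pairs[OF fin] by (rule two_choose)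
    then have "real (2 * n) = real (N * (N - 1))" by simp
    moreover have "X \<noteq> {}" using uv(1) by blast
    then have "N \<ge> 1" using fin unfolding N_def by (simp add: Suc_le_eq card_gt_0_iff)
    then have "real (N - 1) = real N - 1" by (simp add: of_nat_diff)
    moreover have "real (N * (N - 1)) = real N * real (N - 1)" by (rule of_nat_mult)
    moreover have "real (2 * n) = 2 * real n" by simp
    ultimately show ?thesis by simp
  qed
  have key: "3 / 2 * real N - 2 \<le> real n - 2 * real C + 2 * real C'"
  proof -
    have "real N \<le> real C' + 1" using C'b by linarith
    moreover have "real N * (real N - 1) = real N ^ 2 - real N" by (simp add: power2_eq_square algebra_simps)
    ultimately show ?thesis using nN Cb by linarith
  qed
  have "\<omega> * ((3 - 2 * (\<Omega> / \<omega>)) * real (card X choose 2) + 3 / 2 * real (card X) - 2)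
      = real n * (3 * \<omega> - 2 * \<Omega>) + \<omega> * (3 / 2 * real N - 2)"
    using assms(5) unfolding n_def N_def card_pairs[OF fin] by (simp add: field_simps)
  also have "\<dots> \<le> real n * (3 * \<omega> - 2 * \<Omega>) + \<omega> * (real n - 2 * real C + 2 * real C')"
    using mult_left_mono[OF key] assms(5) by simp
  also have "\<dots> = real n * (4 * \<omega> - 2 * \<Omega>) - 2 * \<omega> * real C + 2 * \<omega> * real C'"
    by (simp add: algebra_simps)
  also have "\<dots> \<le> d_Delta X t t'" by (rule dge)
  finally show ?thesis .
qed

end
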